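(* Let $p,q$ be integers with $q\geqslant p>2$ and $p+q=n$, and let $T$ be an $n$-vertex tree whose vertex bipartition has parts of sizes $p$ and $q$. Then $\xi^{ee}(T)\leqslant\frac{5n-4}{6}$, with equality if and only if $T\cong P_2(p-1,q-1)$.
   Context: For a vertex $x$ of a connected graph $G$, $\varepsilon_G(x)$ is its eccentricity and $d_G(x)$ its degree; $\xi^{ee}(G)=\sum_{uv\in E(G)}\left(\frac{1}{\varepsilon_G(u)}+\frac{1}{\varepsilon_G(v)}\right)=\sum_{x}\frac{d_G(x)}{\varepsilon_G(x)}$. A tree has a $(p,q)$-bipartition if its vertex set splits into two independent sets of sizes $p$ and $q$. $P_2(a,b)$ is the tree on $a+b+2$ vertices obtained from an edge $xy$ by attaching $a$ pendant vertices to $x$ and $b$ pendant vertices to $y$. *)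

theory Defs
  imports Complex_Main
begin

definition simple_graph :: "'a set \<Rightarrow> 'a set set \<Rightarrow> bool" where
  "simple_graph V E \<longleftrightarrow> finite V \<and>
     (\<forall>e\<in>E. \<exists>u v. e = {u, v} \<and> u \<in> V \<and> v \<in> V \<and> u \<noteq> v)"

definition is_walk :: "'a set \<Rightarrow> 'a set set \<Rightarrow> 'a list \<Rightarrow> bool" where
  "is_walk V E xs \<longleftrightarrow> xs \<noteq> [] \<and> set xs \<subseteq> V \<and>
     (\<forall>i. Suc i < length xs \<longrightarrow> {xs ! i, xs ! Suc i} \<in> E)"

definition connected_graph :: "'a set \<Rightarrow> 'a set set \<Rightarrow> bool" where
  "connected_graph V E \<longleftrightarrow> V \<noteq> {} \<and>
     (\<forall>u\<in>V. \<forall>v\<in>V. \<exists>xs. is_walk V E xs \<and> hd xs = u \<and> last xs = v)"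

definition is_cycle :: "'a set \<Rightarrow> 'a set set \<Rightarrow> 'a list \<Rightarrow> bool" where
  "is_cycle V E xs \<longleftrightarrow> is_walk V E xs \<and> distinct xs \<and> length xs \<ge> 3 \<and>
     {last xs, hd xs} \<in> E"

definition is_tree :: "'a set \<Rightarrow> 'a set set \<Rightarrow> bool" where
  "is_tree V E \<longleftrightarrow> simple_graph V E \<and> connected_graph V E \<and>
     \<not> (\<exists>xs. is_cycle V E xs)"

definition gdist :: "'a set \<Rightarrow> 'a set set \<Rightarrow> 'a \<Rightarrow> 'a \<Rightarrow> nat" where
  "gdist V E u v = (LEAST k. \<exists>xs. is_walk V E xs \<and> hd xs = u \<and> last xs = v
                                 \<and> length xs = Suc k)"

definition ecc :: "'a set \<Rightarrow> 'a set set \<Rightarrow> 'a \<Rightarrow> nat" where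
  "ecc V E x = Max (gdist V E x ` V)"

definition degree :: "'a set set \<Rightarrow> 'a \<Rightarrow> nat" where
  "degree E x = card {e \<in> E. x \<in> e}"

definition xi_ee :: "'a set \<Rightarrow> 'a set set \<Rightarrow> real" where
  "xi_ee V E = (\<Sum>x\<in>V. real (degree E x) / real (ecc V E x))"

definition independent :: "'a set set \<Rightarrow> 'a set \<Rightarrow> bool" where
  "independent E A \<longleftrightarrow> (\<forall>u\<in>A. \<forall>v\<in>A. {u, v} \<notin> E)"

definition has_bipartition :: "'a set \<Rightarrow> 'a set set \<Rightarrow> nat \<Rightarrow> nat \<Rightarrow> bool" where
  "has_bipartition V E p q \<longleftrightarrow> (\<exists>A B. A \<union> B = V \<and> A \<inter> B = {} \<and>
     independent E A \<and> independent E B \<and> card A = p \<and> card B = q)"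

definition graph_iso :: "'a set \<Rightarrow> 'a set set \<Rightarrow> 'b set \<Rightarrow> 'b set set \<Rightarrow> bool" where
  "graph_iso V E V' E' \<longleftrightarrow> (\<exists>f. bij_betw f V V' \<and>
     (\<forall>u\<in>V. \<forall>v\<in>V. {u, v} \<in> E \<longleftrightarrow> {f u, f v} \<in> E'))"

text \<open>P_2(a,b): vertices 0..a+b+1, edge {0,1}; pendants 2..a+1 at 0, a+2..a+b+1 at 1.\<close>
definition P2_verts :: "nat \<Rightarrow> nat \<Rightarrow> nat set" where
  "P2_verts a b = {0..a + b + 1}"

definition P2_edges :: "nat \<Rightarrow> nat \<Rightarrow> nat set set" where
  "P2_edges a b = {{0, 1}} \<union> (\<lambda>i. {0, i}) ` {2..a + 1} \<union> (\<lambda>i. {1, i}) ` {a + 2..a + b + 1}"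

end

theory Submission
  imports Defs
begin


lemma walk_single[simp]: "is_walk V E [a] \<longleftrightarrow> a \<in> V"
  unfolding is_walk_def by auto

lemma walk_cons2[simp]: "is_walk V E (a#b#xs) \<longleftrightarrow> a \<in> V \<and> {a,b} \<in> E \<and> is_walk V E (b#xs)"
proof
  assume h: "is_walk V E (a#b#xs)"
  have e: "{a,b} \<in> E"
  proof -
    have "Suc 0 < length (a#b#xs)" by simp
    then have "{(a#b#xs) ! 0, (a#b#xs) ! Suc 0} \<in> E" using h unfolding is_walk_def by blast
    then show ?thesis by simp
  qed
  have w: "is_walk V E (b#xs)" unfolding is_walk_def
  proof (intro conjI allI impI)
    show "b # xs \<noteq> []" by simp
    show "set (b # xs) \<subseteq> V" using h unfolding is_walk_def by auto
    fix i assume "Suc i < length (b # xs)"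
    then have "Suc (Suc i) < length (a#b#xs)" by simp
    then have "{(a#b#xs) ! Suc i, (a#b#xs) ! Suc (Suc i)} \<in> E" using h unfolding is_walk_def by blast
    then show "{(b # xs) ! i, (b # xs) ! Suc i} \<in> E" by simp
  qed
  have "a \<in> V" using h unfolding is_walk_def by auto
  then show "a \<in> V \<and> {a,b} \<in> E \<and> is_walk V E (b#xs)" using e w by blast
next
  assume h: "a \<in> V \<and> {a,b} \<in> E \<and> is_walk V E (b#xs)"
  show "is_walk V E (a#b#xs)" unfolding is_walk_def
  proof (intro conjI allI impI)
    show "set (a # b # xs) \<subseteq> V" using h unfolding is_walk_def by auto
    fix i assume i: "Suc i < length (a#b#xs)"
    show "{(a # b # xs) ! i, (a # b # xs) ! Suc i} \<in> E"
    proof (cases i)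
      case 0 then show ?thesis using h by simp
    next
      case (Suc j)
      then have "Suc j < length (b#xs)" using i by simp
      then have "{(b#xs) ! j, (b#xs) ! Suc j} \<in> E" using h unfolding is_walk_def by blast
      then show ?thesis using Suc by simp
    qed
  qed simp
qed

lemma gdist_le: "is_walk V E xs \<Longrightarrow> hd xs = u \<Longrightarrow> last xs = v \<Longrightarrow> length xs = Suc k \<Longrightarrow> gdist V E u v \<le> k"
  unfolding gdist_def by (rule Least_le) blast

lemma gdist_walk: assumes "connected_graph V E" "u \<in> V" "v \<in> V"
  shows "\<exists>xs. is_walk V E xs \<and> hd xs = u \<and> last xs = v \<and> length xs = Suc (gdist V E u v)"
proof -
  obtain xs where "is_walk V E xs" "hd xs = u" "last xs = v" using assms unfolding connected_graph_def by blast
  then have "\<exists>k xs. is_walk V E xs \<and> hd xs = u \<and> last xs = v \<and> length xs = Suc k"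
    by (metis is_walk_def length_greater_0_conv Suc_pred)
  then show ?thesis unfolding gdist_def by (rule LeastI_ex)
qed

lemma gdist_le2: assumes "connected_graph V E" "u \<in> V" "v \<in> V" "gdist V E u v \<le> 2"
  shows "u = v \<or> {u,v} \<in> E \<or> (\<exists>w\<in>V. {u,w} \<in> E \<and> {w,v} \<in> E)"
proof -
  obtain xs where xs: "is_walk V E xs" "hd xs = u" "last xs = v" "length xs = Suc (gdist V E u v)"
    using gdist_walk[OF assms(1-3)] by blast
  consider "length xs = 1" | "length xs = 2" | "length xs = 3" using assms(4) xs(4) by linarith
  then show ?thesis
  proof cases
    case 1 then obtain a where "xs = [a]" by (metis One_nat_def length_0_conv length_Suc_conv)
    then show ?thesis using xs by auto
  next
    case 2 then obtain a b where "xs = [a,b]" by (metis One_nat_def length_0_conv length_Suc_conv numeral_2_eq_2)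
    then show ?thesis using xs by auto
  next
    case 3 then obtain a b c where "xs = [a,b,c]" by (metis One_nat_def length_0_conv length_Suc_conv numeral_3_eq_3)
    then show ?thesis using xs by auto
  qed
qed

lemma ecc_le: assumes "finite V" "V \<noteq> {}" "ecc V E x \<le> k" "v \<in> V" shows "gdist V E x v \<le> k"
proof -
  have "gdist V E x v \<le> ecc V E x" unfolding ecc_def by (rule Max_ge) (use assms in auto)
  then show ?thesis using assms(3) by linarith
qed

lemma ecc_leI: assumes "finite V" "V \<noteq> {}" "\<And>v. v \<in> V \<Longrightarrow> gdist V E x v \<le> k" shows "ecc V E x \<le> k"
  using assms unfolding ecc_def by auto

lemma gdist_le_ecc: assumes "finite V" "v \<in> V" shows "gdist V E x v \<le> ecc V E x"
  unfolding ecc_def by (rule Max_ge) (use assms in auto)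

lemma ecc_geI: assumes "finite V" "v \<in> V" "k \<le> gdist V E x v" shows "k \<le> ecc V E x"
  using gdist_le_ecc[OF assms(1,2), of E x] assms(3) by linarith



definition nbrs :: "'a set \<Rightarrow> 'a set set \<Rightarrow> 'a \<Rightarrow> 'a set" where
  "nbrs V E x = {v\<in>V. {x,v} \<in> E}"

lemma simple_edge: assumes "simple_graph V E" "{a,b} \<in> E" shows "a \<in> V \<and> b \<in> V \<and> a \<noteq> b"
proof -
  obtain u v where "{a,b} = {u,v}" "u \<in> V" "v \<in> V" "u \<noteq> v" using assms unfolding simple_graph_def by blast
  then show ?thesis by (auto simp: doubleton_eq_iff)
qed

lemma simple_edge_obtain: assumes "simple_graph V E" "e \<in> E" obtains u v where "e = {u,v}" "u \<in> V" "v \<in> V" "u \<noteq> v"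
  using assms unfolding simple_graph_def by blast

lemma finite_E: assumes "simple_graph V E" shows "finite E"
proof -
  have "E \<subseteq> Pow V" using assms unfolding simple_graph_def by auto
  moreover have "finite V" using assms unfolding simple_graph_def by auto
  ultimately show ?thesis by (meson finite_Pow_iff finite_subset)
qed

lemma degree_nbrs: assumes "simple_graph V E" shows "degree E x = card (nbrs V E x)"
proof -
  have "{e \<in> E. x \<in> e} = (\<lambda>v. {x,v}) ` nbrs V E x"
  proof
    show "{e \<in> E. x \<in> e} \<subseteq> (\<lambda>v. {x,v}) ` nbrs V E x"
    proof
      fix e assume e: "e \<in> {e \<in> E. x \<in> e}"
      then obtain u v where uv: "e = {u,v}" "u \<in> V" "v \<in> V" "u \<noteq> v" using assms simple_edge_obtain by blast
      show "e \<in> (\<lambda>v. {x,v}) ` nbrs V E x"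
      proof (cases "x = u")
        case True then show ?thesis using e uv unfolding nbrs_def by auto
      next
        case False then have "x = v" using e uv by auto
        then show ?thesis using e uv unfolding nbrs_def by (auto simp: insert_commute)
      qed
    qed
  qed (auto simp: nbrs_def)
  moreover have "inj_on (\<lambda>v. {x,v}) (nbrs V E x)" by (auto simp: inj_on_def doubleton_eq_iff)
  ultimately show ?thesis unfolding degree_def by (simp add: card_image)
qed

lemma nbrs_sub: "nbrs V E x \<subseteq> V" unfolding nbrs_def by auto

lemma handshake: assumes "simple_graph V E" shows "(\<Sum>x\<in>V. degree E x) = 2 * card E"
proof -
  have fV: "finite V" using assms unfolding simple_graph_def by auto
  have fE: "finite E" using finite_E[OF assms] .
  have "(\<Sum>x\<in>V. degree E x) = (\<Sum>x\<in>V. \<Sum>e\<in>E. if x \<in> e then 1 else 0)"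
  proof (rule sum.cong[OF refl])
    fix x
    have "card {e \<in> E. x \<in> e} = (\<Sum>e\<in>{e \<in> E. x \<in> e}. 1)" by (rule card_eq_sum)
    also have "\<dots> = (\<Sum>e\<in>E. if x \<in> e then 1 else 0)" by (rule sum.inter_filter[OF fE])
    finally show "degree E x = (\<Sum>e\<in>E. if x \<in> e then 1 else 0)" unfolding degree_def .
  qed
  also have "\<dots> = (\<Sum>e\<in>E. \<Sum>x\<in>V. if x \<in> e then 1 else 0)" by (rule sum.swap)
  also have "\<dots> = (\<Sum>e\<in>E. 2)"
  proof (rule sum.cong[OF refl])
    fix e assume "e \<in> E"
    then obtain u v where uv: "e = {u,v}" "u \<in> V" "v \<in> V" "u \<noteq> v" using assms simple_edge_obtain by blast
    have "card {x\<in>V. x \<in> e} = (\<Sum>x\<in>{x\<in>V. x \<in> e}. 1)" by (rule card_eq_sum)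
    also have "\<dots> = (\<Sum>x\<in>V. if x \<in> e then 1 else 0)" by (rule sum.inter_filter[OF fV])
    finally have "(\<Sum>x\<in>V. if x \<in> e then 1 else 0) = card {x\<in>V. x \<in> e}" by simp
    also have "{x\<in>V. x \<in> e} = {u,v}" using uv by auto
    finally show "(\<Sum>x\<in>V. if x \<in> e then 1 else 0) = (2::nat)" using uv by simp
  qed
  finally show ?thesis by simp
qed

lemma walk_mono: assumes "is_walk V' E' xs" "V' \<subseteq> V" "E' \<subseteq> E" shows "is_walk V E xs"
  unfolding is_walk_def
proof (intro conjI allI impI)
  show "xs \<noteq> []" "set xs \<subseteq> V" using assms unfolding is_walk_def by auto
  fix i assume "Suc i < length xs"
  then have "{xs ! i, xs ! Suc i} \<in> E'" using assms(1) unfolding is_walk_def by blast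
  then show "{xs ! i, xs ! Suc i} \<in> E" using assms(3) by blast
qed

lemma cycle_mono: assumes "is_cycle V' E' xs" "V' \<subseteq> V" "E' \<subseteq> E" shows "is_cycle V E xs"
  using assms walk_mono[of V' E' xs V E] unfolding is_cycle_def by blast

lemma walk_drop: assumes "is_walk V E xs" "j < length xs" shows "is_walk V E (drop j xs)"
  unfolding is_walk_def
proof (intro conjI allI impI)
  show "drop j xs \<noteq> []" using assms by simp
  show "set (drop j xs) \<subseteq> V" using assms(1) set_drop_subset[of j xs] unfolding is_walk_def by blast
  fix i assume i: "Suc i < length (drop j xs)"
  then have "Suc (j + i) < length xs" by simp
  then have "{xs ! (j+i), xs ! Suc (j+i)} \<in> E" using assms(1) unfolding is_walk_def by blast
  then show "{drop j xs ! i, drop j xs ! Suc i} \<in> E" using assms(2) i by simp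
qed

lemma walk_snoc: assumes "is_walk V E xs" "w \<in> V" "{last xs, w} \<in> E" shows "is_walk V E (xs @ [w])"
  unfolding is_walk_def
proof (intro conjI allI impI)
  show "set (xs @ [w]) \<subseteq> V" using assms unfolding is_walk_def by auto
  fix i assume i: "Suc i < length (xs @ [w])"
  show "{(xs @ [w]) ! i, (xs @ [w]) ! Suc i} \<in> E"
  proof (cases "Suc i < length xs")
    case True then show ?thesis using assms(1) unfolding is_walk_def by (auto simp: nth_append)
  next
    case False then have "Suc i = length xs" using i by auto
    moreover have "xs \<noteq> []" using assms(1) unfolding is_walk_def by auto
    ultimately have "i = length xs - 1" by simp
    then show ?thesis using assms(3) \<open>xs \<noteq> []\<close> \<open>Suc i = length xs\<close> by (auto simp: nth_append last_conv_nth)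
  qed
qed simp

lemma mindeg_cycle:
  assumes sg: "simple_graph V E" and ne: "V \<noteq> {}" and deg: "\<And>v. v \<in> V \<Longrightarrow> 2 \<le> degree E v"
  shows "\<exists>xs. is_cycle V E xs"
proof -
  have fV: "finite V" using sg unfolding simple_graph_def by auto
  obtain v0 where v0: "v0 \<in> V" using ne by blast
  let ?P = "\<lambda>xs. is_walk V E xs \<and> distinct xs"
  have P0: "?P [v0]" using v0 by simp
  have bnd: "\<forall>ys. ?P ys \<longrightarrow> length ys < Suc (card V)"
  proof (intro allI impI)
    fix ys assume "?P ys"
    then have "card (set ys) \<le> card V" "card (set ys) = length ys"
      using fV card_mono[of V "set ys"] distinct_card[of ys] unfolding is_walk_def by auto
    then show "length ys < Suc (card V)" by simp
  qed
  obtain xs where xs: "?P xs" and mx: "\<forall>ys. ?P ys \<longrightarrow> length ys \<le> length xs"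
    using Lattices_Big.ex_has_greatest_nat[of ?P "[v0]" length, OF P0 bnd] by blast
  have xsne: "xs \<noteq> []" using xs unfolding is_walk_def by auto
  define v where "v = last xs"
  have vV: "v \<in> V" using xs xsne unfolding v_def is_walk_def by auto
  define L where "L = length xs"
  have L1: "L \<ge> 1" using xsne unfolding L_def by (cases xs) auto
  have "2 \<le> card (nbrs V E v)" using deg[OF vV] degree_nbrs[OF sg] by simp
  then obtain w where w: "w \<in> nbrs V E v" "L \<ge> 2 \<longrightarrow> w \<noteq> xs ! (L - 2)"
  proof -
    obtain a b where ab: "a \<in> nbrs V E v" "b \<in> nbrs V E v" "a \<noteq> b"
    proof -
      have f: "finite (nbrs V E v)" using \<open>2 \<le> card (nbrs V E v)\<close> card.infinite by force
      have "\<not> card (nbrs V E v) \<le> Suc 0" using \<open>2 \<le> card (nbrs V E v)\<close> by simp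
      then show ?thesis using card_le_Suc0_iff_eq[OF f] that by blast
    qed
    show ?thesis using ab that by metis
  qed
  have wv: "{v,w} \<in> E" "w \<in> V" using w unfolding nbrs_def by auto
  have wnv: "w \<noteq> v" using simple_edge[OF sg wv(1)] by auto
  have "w \<in> set xs"
  proof (rule ccontr)
    assume "w \<notin> set xs"
    then have "?P (xs @ [w])" using walk_snoc[OF _ wv(2)] xs wv(1) unfolding v_def by auto
    then have "length (xs @ [w]) \<le> length xs" using mx by blast
    then show False by simp
  qed
  then obtain j where j: "j < L" "xs ! j = w" unfolding L_def by (metis in_set_conv_nth)
  have lastL: "xs ! (L - 1) = v" unfolding v_def L_def using xsne by (simp add: last_conv_nth)
  have "j \<noteq> L - 1" using j lastL wnv by auto
  moreover have "L \<ge> 2 \<Longrightarrow> j \<noteq> L - 2" using j w(2) by auto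
  ultimately have jL: "j + 3 \<le> L" using j L1 by linarith
  define ys where "ys = drop j xs"
  have "is_cycle V E ys" unfolding is_cycle_def
  proof (intro conjI)
    show "is_walk V E ys" unfolding ys_def using walk_drop xs j unfolding L_def by blast
    show "distinct ys" unfolding ys_def using xs by simp
    show "3 \<le> length ys" unfolding ys_def using jL L_def by simp
    have "hd ys = w" unfolding ys_def using j L_def by (simp add: hd_drop_conv_nth)
    moreover have "last ys = v" unfolding ys_def v_def using j L_def by simp
    ultimately show "{last ys, hd ys} \<in> E" using wv by simp
  qed
  then show ?thesis by blast
qed

lemma forest_edges:
  assumes "simple_graph V E" "\<not> (\<exists>xs. is_cycle V E xs)" "V \<noteq> {}"
  shows "card E + 1 \<le> card V"
  using assms
proof (induction "card V" arbitrary: V E rule: less_induct)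
  case less
  have fV: "finite V" using less.prems unfolding simple_graph_def by auto
  have fE: "finite E" using finite_E[OF less.prems(1)] .
  have "\<not> (\<forall>v\<in>V. 2 \<le> degree E v)" using mindeg_cycle[OF less.prems(1) less.prems(3)] less.prems(2) by blast
  then obtain v where v: "v \<in> V" "degree E v \<le> 1" by force
  define V' where "V' = V - {v}"
  define E' where "E' = {e\<in>E. v \<notin> e}"
  have sg': "simple_graph V' E'" unfolding simple_graph_def
  proof (intro conjI ballI)
    show "finite V'" using fV unfolding V'_def by simp
    fix e assume e: "e \<in> E'"
    then obtain a b where ab: "e = {a,b}" "a \<in> V" "b \<in> V" "a \<noteq> b" using less.prems(1) simple_edge_obtain unfolding E'_def by blast
    then have "a \<in> V'" "b \<in> V'" using e unfolding E'_def V'_def by auto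
    then show "\<exists>u v. e = {u, v} \<and> u \<in> V' \<and> v \<in> V' \<and> u \<noteq> v" using ab by blast
  qed
  have ac': "\<not> (\<exists>xs. is_cycle V' E' xs)" using less.prems(2) cycle_mono[of V' E' _ V E] unfolding V'_def E'_def by blast
  have cE: "card E = card E' + degree E v"
  proof -
    have "E = E' \<union> {e\<in>E. v \<in> e}" "E' \<inter> {e\<in>E. v \<in> e} = {}" unfolding E'_def by auto
    then show ?thesis unfolding degree_def using fE by (metis card_Un_disjoint finite_Un)
  qed
  show ?case
  proof (cases "V' = {}")
    case True
    then have "V = {v}" using v unfolding V'_def by auto
    then have "E = {}" using less.prems(1) unfolding simple_graph_def by auto
    then show ?thesis using \<open>V = {v}\<close> by simp
  next
    case False
    have "card V' < card V" unfolding V'_def by (rule card_Diff1_less[OF fV v(1)])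
    then have "card E' + 1 \<le> card V'" using less.hyps[of V' E'] sg' ac' False by blast
    then show ?thesis using cE v fV unfolding V'_def by (simp add: card_Diff_singleton)
  qed
qed



definition acyc :: "'a set \<Rightarrow> 'a set set \<Rightarrow> bool" where
  "acyc V E \<longleftrightarrow> \<not> (\<exists>xs. is_cycle V E xs)"

lemma no_loop: "simple_graph V E \<Longrightarrow> {a} \<notin> E"
  using simple_edge[of V E a a] by auto

lemma tri: assumes "simple_graph V E" "acyc V E" "{a,b} \<in> E" "{b,c} \<in> E" "{c,a} \<in> E"
  shows False
proof -
  have "a \<in> V" "b \<in> V" "c \<in> V" "a \<noteq> b" "b \<noteq> c" "c \<noteq> a"
    using simple_edge[OF assms(1) assms(3)] simple_edge[OF assms(1) assms(4)] simple_edge[OF assms(1) assms(5)] by auto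
  then have "is_cycle V E [a,b,c]" using assms(3-5) unfolding is_cycle_def by simp
  then show False using assms(2) unfolding acyc_def by blast
qed

lemma quad: assumes "simple_graph V E" "acyc V E" "{a,b} \<in> E" "{b,c} \<in> E" "{c,d} \<in> E" "{d,a} \<in> E"
  "a \<noteq> c" "b \<noteq> d"
  shows False
proof -
  have "a \<in> V" "b \<in> V" "c \<in> V" "d \<in> V" "a \<noteq> b" "b \<noteq> c" "c \<noteq> d" "d \<noteq> a"
    using simple_edge[OF assms(1) assms(3)] simple_edge[OF assms(1) assms(4)]
      simple_edge[OF assms(1) assms(5)] simple_edge[OF assms(1) assms(6)] by auto
  then have "is_cycle V E [a,b,c,d]" using assms(3-8) unfolding is_cycle_def by auto
  then show False using assms(2) unfolding acyc_def by blast
qed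

lemma pent: assumes "simple_graph V E" "acyc V E" "{a,b} \<in> E" "{b,c} \<in> E" "{c,d} \<in> E" "{d,e} \<in> E" "{e,a} \<in> E"
  "distinct [a,b,c,d,e]"
  shows False
proof -
  have "a \<in> V" "b \<in> V" "c \<in> V" "d \<in> V" "e \<in> V"
    using simple_edge[OF assms(1) assms(3)] simple_edge[OF assms(1) assms(4)]
      simple_edge[OF assms(1) assms(5)] simple_edge[OF assms(1) assms(6)] by auto
  then have "is_cycle V E [a,b,c,d,e]" using assms(3-8) unfolding is_cycle_def by auto
  then show False using assms(2) unfolding acyc_def by blast
qed

lemma gdist_le1: assumes "connected_graph V E" "u \<in> V" "v \<in> V" "gdist V E u v \<le> 1"
  shows "u = v \<or> {u,v} \<in> E"
proof -
  obtain xs where xs: "is_walk V E xs" "hd xs = u" "last xs = v" "length xs = Suc (gdist V E u v)"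
    using gdist_walk[OF assms(1-3)] by blast
  consider "length xs = 1" | "length xs = 2" using assms(4) xs(4) by linarith
  then show ?thesis
  proof cases
    case 1 then obtain a where "xs = [a]" by (auto simp: length_Suc_conv)
    then show ?thesis using xs by auto
  next
    case 2 then obtain a b where "xs = [a,b]" by (auto simp: length_Suc_conv numeral_2_eq_2)
    then show ?thesis using xs by auto
  qed
qed

lemma no_universal:
  assumes "has_bipartition V E p q" "p > 2" "q > 2" "z \<in> V"
  shows "\<exists>v\<in>V. v \<noteq> z \<and> {z,v} \<notin> E"
proof -
  obtain A B where AB: "A \<union> B = V" "A \<inter> B = {}" "independent E A" "independent E B" "card A = p" "card B = q"
    using assms(1) unfolding has_bipartition_def by blast
  have key: "\<exists>v\<in>S. v \<noteq> z \<and> {z,v} \<notin> E" if "z \<in> S" "independent E S" "card S > 2" for S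
  proof -
    have "\<not> S \<subseteq> {z}"
    proof
      assume "S \<subseteq> {z}"
      then have "card S \<le> card {z}" by (intro card_mono) auto
      then show False using that(3) by simp
    qed
    then obtain v where "v \<in> S" "v \<noteq> z" by blast
    then show ?thesis using that(1,2) unfolding independent_def by blast
  qed
  show ?thesis
  proof (cases "z \<in> A")
    case True then show ?thesis using key[of A] AB assms by auto
  next
    case False then have "z \<in> B" using AB assms by auto
    then show ?thesis using key[of B] AB assms by auto
  qed
qed

lemma ecc_ge2:
  assumes "connected_graph V E" "finite V" "x \<in> V" "\<exists>v\<in>V. v \<noteq> x \<and> {x,v} \<notin> E"
  shows "2 \<le> ecc V E x"
proof -
  obtain v where v: "v \<in> V" "v \<noteq> x" "{x,v} \<notin> E" using assms(4) by blast
  have "\<not> gdist V E x v \<le> 1" using gdist_le1[OF assms(1,3) v(1)] v by blast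
  then show ?thesis using ecc_geI[OF assms(2) v(1), of 2 E x] by simp
qed



lemma ecc2_adj:
  assumes sg: "simple_graph V E" and conn: "connected_graph V E" and ac: "acyc V E"
    and xV: "x \<in> V" and yV: "y \<in> V" and xy: "x \<noteq> y"
    and ex: "ecc V E x \<le> 2" and ey: "ecc V E y \<le> 2"
    and nu: "\<forall>z\<in>V. \<exists>v\<in>V. v \<noteq> z \<and> {z,v} \<notin> E"
  shows "{x,y} \<in> E"
proof (rule ccontr)
  assume nxy: "{x,y} \<notin> E"
  have fV: "finite V" using sg unfolding simple_graph_def by auto
  have Vne: "V \<noteq> {}" using xV by auto
  have dx: "\<And>v. v \<in> V \<Longrightarrow> gdist V E x v \<le> 2" using ecc_le[OF fV Vne ex] .
  have dy: "\<And>v. v \<in> V \<Longrightarrow> gdist V E y v \<le> 2" using ecc_le[OF fV Vne ey] .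
  obtain z where z: "z \<in> V" "{x,z} \<in> E" "{z,y} \<in> E"
    using gdist_le2[OF conn xV yV dx[OF yV]] xy nxy by blast
  have c1: "v = z" if v: "v \<in> V" "{x,v} \<in> E" for v
  proof (rule ccontr)
    assume vz: "v \<noteq> z"
    have vy: "v \<noteq> y" using v nxy by auto
    have xv: "x \<noteq> v" using simple_edge[OF sg v(2)] by auto
    consider "y = v" | "{y,v} \<in> E" | "\<exists>u\<in>V. {y,u} \<in> E \<and> {u,v} \<in> E"
      using gdist_le2[OF conn yV v(1) dy[OF v(1)]] by blast
    then show False
    proof cases
      case 1 then show False using vy by simp
    next
      case 2
      show False using quad[OF sg ac v(2), of y z] 2 z xy vz by (simp add: insert_commute)
    next
      case 3
      then obtain u where u: "u \<in> V" "{y,u} \<in> E" "{u,v} \<in> E" by blast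
      show False
      proof (cases "u = z")
        case True then show False using tri[OF sg ac v(2), of z] u z by (simp add: insert_commute)
      next
        case False
        have "u \<noteq> x" using u nxy by (auto simp: insert_commute)
        moreover have "u \<noteq> v" "u \<noteq> y" using simple_edge[OF sg u(3)] simple_edge[OF sg u(2)] by auto
        moreover have "x \<noteq> z" "y \<noteq> z" using simple_edge[OF sg z(2)] simple_edge[OF sg z(3)] by auto
        ultimately have "distinct [x,v,u,y,z]" using False xv vy vz xy by auto
        then show False using pent[OF sg ac v(2), of u y z] u z by (simp add: insert_commute)
      qed
    qed
  qed
  have c2: "{z,v} \<in> E" if v: "v \<in> V" "v \<noteq> z" for v
  proof -
    consider "x = v" | "{x,v} \<in> E" | "\<exists>u\<in>V. {x,u} \<in> E \<and> {u,v} \<in> E"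
      using gdist_le2[OF conn xV v(1) dx[OF v(1)]] by blast
    then show ?thesis
    proof cases
      case 1 then show ?thesis using z by (simp add: insert_commute)
    next
      case 2 then show ?thesis using c1 v by blast
    next
      case 3 then obtain u where "u \<in> V" "{x,u} \<in> E" "{u,v} \<in> E" by blast
      then show ?thesis using c1 by blast
    qed
  qed
  show False using nu z(1) c2 by blast
qed

lemma C_cases:
  assumes sg: "simple_graph V E" and conn: "connected_graph V E" and ac: "acyc V E"
    and nu: "\<forall>z\<in>V. \<exists>v\<in>V. v \<noteq> z \<and> {z,v} \<notin> E"
  defines "C \<equiv> {x\<in>V. ecc V E x \<le> 2}"
  shows "C = {} \<or> (\<exists>x. C = {x} \<and> x \<in> V) \<or> (\<exists>x y. C = {x,y} \<and> x \<noteq> y \<and> {x,y} \<in> E \<and> x \<in> V \<and> y \<in> V)"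
proof -
  have adj: "\<And>x y. x \<in> C \<Longrightarrow> y \<in> C \<Longrightarrow> x \<noteq> y \<Longrightarrow> {x,y} \<in> E"
    using ecc2_adj[OF sg conn ac _ _ _ _ _ nu] unfolding C_def by blast
  show ?thesis
  proof (cases "C = {}")
    case False
    then obtain x where x: "x \<in> C" by blast
    show ?thesis
    proof (cases "C = {x}")
      case True then show ?thesis using x unfolding C_def by auto
    next
      case False
      then obtain y where y: "y \<in> C" "y \<noteq> x" using x by blast
      have "C = {x,y}"
      proof (rule ccontr)
        assume "C \<noteq> {x,y}"
        then obtain w where w: "w \<in> C" "w \<noteq> x" "w \<noteq> y" using x y by blast
        show False using tri[OF sg ac adj[OF x y(1)] adj[OF y(1) w(1)] adj[OF w(1) x]] y w by auto
      qed
      then show ?thesis using adj[OF x y(1)] x y unfolding C_def by auto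
    qed
  qed simp
qed

lemma nbrs_disj: assumes "simple_graph V E" "acyc V E" "{x,y} \<in> E"
  shows "nbrs V E x \<inter> nbrs V E y = {}"
proof (rule ccontr)
  assume "nbrs V E x \<inter> nbrs V E y \<noteq> {}"
  then obtain v where "{x,v} \<in> E" "{y,v} \<in> E" unfolding nbrs_def by blast
  then show False using tri[OF assms(1,2), of x y v] assms(3) by (simp add: insert_commute)
qed

lemma C_sum:
  assumes sg: "simple_graph V E" and conn: "connected_graph V E" and ac: "acyc V E"
    and nu: "\<forall>z\<in>V. \<exists>v\<in>V. v \<noteq> z \<and> {z,v} \<notin> E"
  defines "C \<equiv> {x\<in>V. ecc V E x \<le> 2}"
  shows "(\<Sum>x\<in>C. degree E x) \<le> card V"
    and "(\<Sum>x\<in>C. degree E x) = card V \<Longrightarrow> card V > 0 \<Longrightarrow>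
       \<exists>x y. x \<in> V \<and> y \<in> V \<and> x \<noteq> y \<and> {x,y} \<in> E \<and> nbrs V E x \<union> nbrs V E y = V"
proof -
  have fV: "finite V" using sg unfolding simple_graph_def by auto
  have cs: "C = {} \<or> (\<exists>x. C = {x} \<and> x \<in> V) \<or> (\<exists>x y. C = {x,y} \<and> x \<noteq> y \<and> {x,y} \<in> E \<and> x \<in> V \<and> y \<in> V)"
    using C_cases[OF sg conn ac nu] unfolding C_def .
  have one: "degree E x < card V" if "x \<in> V" for x
  proof -
    have "nbrs V E x \<subseteq> V - {x}" using no_loop[OF sg] unfolding nbrs_def by auto
    then have "card (nbrs V E x) \<le> card (V - {x})" using fV by (intro card_mono) auto
    then show ?thesis using degree_nbrs[OF sg, of x] that fV card_Diff1_less[OF fV that] by linarith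
  qed
  have two: "degree E x + degree E y = card (nbrs V E x \<union> nbrs V E y)" if "{x,y} \<in> E" for x y
    using degree_nbrs[OF sg] nbrs_disj[OF sg ac that] fV nbrs_sub
    by (metis card_Un_disjoint finite_subset)
  have twole: "card (nbrs V E x \<union> nbrs V E y) \<le> card V" for x y
    using fV by (intro card_mono) (auto simp: nbrs_def)
  show "(\<Sum>x\<in>C. degree E x) \<le> card V"
    using cs
  proof (elim disjE exE conjE)
    fix x assume "C = {x}" "x \<in> V" then show ?thesis using one[of x] by simp
  next
    fix x y assume h: "C = {x,y}" "x \<noteq> y" "{x,y} \<in> E" "x \<in> V" "y \<in> V"
    then show ?thesis using two[OF h(3)] twole[of x y] by simp
  qed simp
  assume eq: "(\<Sum>x\<in>C. degree E x) = card V" and pos: "card V > 0"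
  show "\<exists>x y. x \<in> V \<and> y \<in> V \<and> x \<noteq> y \<and> {x,y} \<in> E \<and> nbrs V E x \<union> nbrs V E y = V"
    using cs
  proof (elim disjE exE conjE)
    assume "C = {}" then show ?thesis using eq pos by simp
  next
    fix x assume "C = {x}" "x \<in> V" then show ?thesis using eq one by fastforce
  next
    fix x y assume h: "C = {x,y}" "x \<noteq> y" "{x,y} \<in> E" "x \<in> V" "y \<in> V"
    then have "card (nbrs V E x \<union> nbrs V E y) = card V" using eq two by simp
    then have "nbrs V E x \<union> nbrs V E y = V" using fV by (intro card_subset_eq) (auto simp: nbrs_def)
    then show ?thesis using h by blast
  qed
qed



definition ds :: "'a set \<Rightarrow> 'a set set \<Rightarrow> 'a \<Rightarrow> 'a \<Rightarrow> bool" where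
  "ds V E x y \<longleftrightarrow> x \<in> V \<and> y \<in> V \<and> x \<noteq> y \<and> {x,y} \<in> E \<and>
     (\<forall>v\<in>V. v = x \<or> v = y \<or> {x,v} \<in> E \<or> {y,v} \<in> E) \<and> (\<forall>e\<in>E. x \<in> e \<or> y \<in> e)"

lemma ds_edge: "ds V E x y \<Longrightarrow> e \<in> E \<Longrightarrow> x \<in> e \<or> y \<in> e"
  unfolding ds_def by (elim conjE) (rule bspec)

lemma ds_basic: "ds V E x y \<Longrightarrow> x \<in> V \<and> y \<in> V \<and> x \<noteq> y \<and> {x,y} \<in> E"
  unfolding ds_def by (elim conjE) (intro conjI)

lemma ds_sym: "ds V E x y \<Longrightarrow> ds V E y x"
  unfolding ds_def by (auto simp: insert_commute)

lemma ds_from_union: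
  assumes sg: "simple_graph V E" and ac: "acyc V E" and h: "x \<in> V" "y \<in> V" "x \<noteq> y" "{x,y} \<in> E"
    and U: "nbrs V E x \<union> nbrs V E y = V"
  shows "ds V E x y"
  unfolding ds_def
proof (intro conjI ballI)
  fix v assume "v \<in> V"
  then show "v = x \<or> v = y \<or> {x,v} \<in> E \<or> {y,v} \<in> E" using U unfolding nbrs_def by blast
next
  fix e assume e: "e \<in> E"
  then obtain a b where ab: "e = {a,b}" "a \<in> V" "b \<in> V" "a \<noteq> b" using sg simple_edge_obtain by blast
  show "x \<in> e \<or> y \<in> e"
  proof (rule ccontr)
    assume n: "\<not> (x \<in> e \<or> y \<in> e)"
    then have ne: "a \<noteq> x" "a \<noteq> y" "b \<noteq> x" "b \<noteq> y" using ab by auto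
    have abE: "{a,b} \<in> E" using e ab by simp
    have a: "{x,a} \<in> E \<or> {y,a} \<in> E" and b: "{x,b} \<in> E \<or> {y,b} \<in> E" using U ab unfolding nbrs_def by blast+
    have c: "\<And>p q. {p,q} = {q,p}" by (rule insert_commute)
    have yx: "{y,x} \<in> E" using h(4) c by metis
    show False using a b
    proof (elim disjE)
      assume "{x,a} \<in> E" "{x,b} \<in> E" then show False using tri[OF sg ac \<open>{x,a} \<in> E\<close> abE] c by metis
    next
      assume "{x,a} \<in> E" "{y,b} \<in> E" then show False using quad[OF sg ac \<open>{x,a} \<in> E\<close> abE _ yx] ne c by metis
    next
      assume "{y,a} \<in> E" "{x,b} \<in> E"
      then have "{b,a} \<in> E" "{a,y} \<in> E" using abE c by metis+
      then show False using quad[OF sg ac \<open>{x,b} \<in> E\<close> \<open>{b,a} \<in> E\<close> \<open>{a,y} \<in> E\<close> yx] ne by metis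
    next
      assume "{y,a} \<in> E" "{y,b} \<in> E" then show False using tri[OF sg ac \<open>{y,a} \<in> E\<close> abE] c by metis
    qed
  qed
qed (use h in auto)

lemma ds_edge_char:
  assumes sg: "simple_graph V E" and ac: "acyc V E" and d: "ds V E x y" and u: "u \<in> V" and v: "v \<in> V"
  shows "{u,v} \<in> E \<longleftrightarrow> (u = x \<and> v = y) \<or> (u = y \<and> v = x)
     \<or> (u = x \<and> v \<in> nbrs V E x - {y}) \<or> (v = x \<and> u \<in> nbrs V E x - {y})
     \<or> (u = y \<and> v \<in> nbrs V E y - {x}) \<or> (v = y \<and> u \<in> nbrs V E y - {x})"
proof
  assume e: "{u,v} \<in> E"
  have uv: "u \<noteq> v" using simple_edge[OF sg e] by auto
  have "\<forall>e\<in>E. x \<in> e \<or> y \<in> e" using d unfolding ds_def by (elim conjE)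
  then have "x \<in> {u,v} \<or> y \<in> {u,v}" using e by (rule bspec)
  then show "(u = x \<and> v = y) \<or> (u = y \<and> v = x)
     \<or> (u = x \<and> v \<in> nbrs V E x - {y}) \<or> (v = x \<and> u \<in> nbrs V E x - {y})
     \<or> (u = y \<and> v \<in> nbrs V E y - {x}) \<or> (v = y \<and> u \<in> nbrs V E y - {x})"
  proof (elim disjE)
    assume "x \<in> {u,v}"
    then have "u = x \<or> v = x" by blast
    then show ?thesis
    proof
      assume ux: "u = x"
      show ?thesis
      proof (cases "v = y")
        case True then show ?thesis using ux by blast
      next
        case False then have "v \<in> nbrs V E x - {y}" using e v ux unfolding nbrs_def by blast
        then show ?thesis using ux by blast
      qed
    next
      assume vx: "v = x"
      show ?thesis
      proof (cases "u = y")
        case True then show ?thesis using vx by blast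
      next
        case False then have "u \<in> nbrs V E x - {y}" using e u vx insert_commute[of v u] unfolding nbrs_def by auto
        then show ?thesis using vx by blast
      qed
    qed
  next
    assume "y \<in> {u,v}"
    then have "u = y \<or> v = y" by blast
    then show ?thesis
    proof
      assume uy: "u = y"
      show ?thesis
      proof (cases "v = x")
        case True then show ?thesis using uy by blast
      next
        case False then have "v \<in> nbrs V E y - {x}" using e v uy unfolding nbrs_def by blast
        then show ?thesis using uy by blast
      qed
    next
      assume vy: "v = y"
      show ?thesis
      proof (cases "u = x")
        case True then show ?thesis using vy by blast
      next
        case False then have "u \<in> nbrs V E y - {x}" using e u vy insert_commute[of v u] unfolding nbrs_def by auto
        then show ?thesis using vy by blast
      qed
    qed
  qed
next
  assume "(u = x \<and> v = y) \<or> (u = y \<and> v = x)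
     \<or> (u = x \<and> v \<in> nbrs V E x - {y}) \<or> (v = x \<and> u \<in> nbrs V E x - {y})
     \<or> (u = y \<and> v \<in> nbrs V E y - {x}) \<or> (v = y \<and> u \<in> nbrs V E y - {x})"
  then show "{u,v} \<in> E"
  proof (elim disjE conjE)
    assume "u = y" "v = x" then show ?thesis using d insert_commute[of x y] unfolding ds_def by auto
  next
    assume "v = x" "u \<in> nbrs V E x - {y}" then show ?thesis using insert_commute[of x u] unfolding nbrs_def by auto
  next
    assume "v = y" "u \<in> nbrs V E y - {x}" then show ?thesis using insert_commute[of y u] unfolding nbrs_def by auto
  qed (use d in \<open>auto simp: ds_def nbrs_def\<close>)
qed

lemma ds_disj:
  assumes sg: "simple_graph V E" and ac: "acyc V E" and d: "ds V E x y"
  shows "nbrs V E x \<inter> nbrs V E y = {}"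
  using nbrs_disj[OF sg ac] ds_basic[OF d] by blast

lemma ds_V:
  assumes d: "ds V E x y"
  shows "V = insert x (insert y ((nbrs V E x - {y}) \<union> (nbrs V E y - {x})))"
  using d unfolding ds_def nbrs_def by auto

lemma ds_side:
  assumes sg: "simple_graph V E" and conn: "connected_graph V E" and ac: "acyc V E" and d: "ds V E x y"
    and ne: "nbrs V E y - {x} \<noteq> {}"
  shows "degree E x = card (nbrs V E x - {y}) + 1" and "ecc V E x = 2"
    and "\<And>v. v \<in> nbrs V E x - {y} \<Longrightarrow> degree E v = 1 \<and> ecc V E v = 3"
proof -
  have fV: "finite V" using sg unfolding simple_graph_def by auto
  have xV: "x \<in> V" and yV: "y \<in> V" and xy: "x \<noteq> y" and exy: "{x,y} \<in> E" using ds_basic[OF d] by auto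
  have Vne: "V \<noteq> {}" using xV by auto
  have dj: "nbrs V E x \<inter> nbrs V E y = {}" using ds_disj[OF sg ac d] .
  have ych: "y \<in> nbrs V E x" using yV exy unfolding nbrs_def by auto
  have fN: "finite (nbrs V E x - {y})" using fV finite_subset[OF _ fV, of "nbrs V E x - {y}"] unfolding nbrs_def by auto
  have "nbrs V E x = insert y (nbrs V E x - {y})" using ych by auto
  then show "degree E x = card (nbrs V E x - {y}) + 1" using degree_nbrs[OF sg, of x] fN
    by (metis Diff_iff card_insert_disjoint insertI1 Suc_eq_plus1)
  obtain w where w: "w \<in> nbrs V E y - {x}" using ne by blast
  have wV: "w \<in> V" "{y,w} \<in> E" "w \<noteq> x" using w unfolding nbrs_def by auto
  have wnx: "{x,w} \<notin> E" using dj w wV unfolding nbrs_def by auto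
  have VV: "V = insert x (insert y ((nbrs V E x - {y}) \<union> (nbrs V E y - {x})))" using ds_V[OF d] .
  show "ecc V E x = 2"
  proof (rule antisym)
    show "ecc V E x \<le> 2"
    proof (rule ecc_leI[OF fV Vne])
      fix v assume v: "v \<in> V"
      consider "v = x" | "v = y" | "v \<in> nbrs V E x - {y}" | "v \<in> nbrs V E y - {x}" using v VV by blast
      then show "gdist V E x v \<le> 2"
      proof cases
        case 1 then show ?thesis using gdist_le[of V E "[x]" x v 0] xV by simp
      next
        case 2 then show ?thesis using gdist_le[of V E "[x,y]" x v 1] xV yV exy by simp
      next
        case 3 then show ?thesis using gdist_le[of V E "[x,v]" x v 1] xV v unfolding nbrs_def by simp
      next
        case 4 then show ?thesis using gdist_le[of V E "[x,y,v]" x v 2] xV yV v exy unfolding nbrs_def by simp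
      qed
    qed
    have "\<not> gdist V E x w \<le> 1" using gdist_le1[OF conn xV wV(1)] wV wnx by auto
    then show "2 \<le> ecc V E x" using ecc_geI[OF fV wV(1), of 2 E x] by simp
  qed
  fix v assume v: "v \<in> nbrs V E x - {y}"
  have vV: "v \<in> V" "{x,v} \<in> E" "v \<noteq> y" using v unfolding nbrs_def by auto
  have vx: "v \<noteq> x" using simple_edge[OF sg vV(2)] by auto
  have nv: "nbrs V E v = {x}"
  proof
    show "{x} \<subseteq> nbrs V E v" using xV vV unfolding nbrs_def by (auto simp: insert_commute)
    show "nbrs V E v \<subseteq> {x}"
    proof
      fix u assume u: "u \<in> nbrs V E v"
      then have uE: "{v,u} \<in> E" "u \<in> V" unfolding nbrs_def by auto
      have "x \<in> {v,u} \<or> y \<in> {v,u}" using ds_edge[OF d uE(1)] .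
      then have "u = x \<or> u = y" using vx vV by auto
      moreover have "u \<noteq> y" using tri[OF sg ac vV(2), of y] uE exy by (auto simp: insert_commute)
      ultimately show "u \<in> {x}" by auto
    qed
  qed
  show "degree E v = 1 \<and> ecc V E v = 3"
  proof
    show "degree E v = 1" using degree_nbrs[OF sg, of v] nv by simp
    show "ecc V E v = 3"
    proof (rule antisym)
      show "ecc V E v \<le> 3"
      proof (rule ecc_leI[OF fV Vne])
        fix u assume u: "u \<in> V"
        consider "u = x" | "u = y" | "u \<in> nbrs V E x - {y}" | "u \<in> nbrs V E y - {x}" using u VV by blast
        then show "gdist V E v u \<le> 3"
        proof cases
          case 1 then show ?thesis using gdist_le[of V E "[v,x]" v u 1] xV vV by (simp add: insert_commute)
        next
          case 2 then show ?thesis using gdist_le[of V E "[v,x,y]" v u 2] xV yV vV exy by (simp add: insert_commute)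
        next
          case 3 then show ?thesis using gdist_le[of V E "[v,x,u]" v u 2] xV u vV unfolding nbrs_def by (simp add: insert_commute)
        next
          case 4 then show ?thesis using gdist_le[of V E "[v,x,y,u]" v u 3] xV yV u vV exy unfolding nbrs_def by (simp add: insert_commute)
        qed
      qed
      have "\<not> gdist V E v w \<le> 2"
      proof
        assume "gdist V E v w \<le> 2"
        then consider "v = w" | "{v,w} \<in> E" | "\<exists>u\<in>V. {v,u} \<in> E \<and> {u,w} \<in> E"
          using gdist_le2[OF conn vV(1) wV(1)] by blast
        then show False
        proof cases
          case 1 then show False using dj v w by auto
        next
          case 2
          then have "x \<in> {v,w} \<or> y \<in> {v,w}" by (rule ds_edge[OF d])
          then show False using vx vV wV simple_edge[OF sg wV(2)] by auto
        next
          case 3 then obtain u where "u \<in> V" "{v,u} \<in> E" "{u,w} \<in> E" by blast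
          then have "u = x" using nv unfolding nbrs_def by auto
          then show False using wnx \<open>{u,w} \<in> E\<close> by simp
        qed
      qed
      then show "3 \<le> ecc V E v" using ecc_geI[OF fV wV(1), of 3 E v] by simp
    qed
  qed
qed



lemma ds_xi:
  assumes sg: "simple_graph V E" and conn: "connected_graph V E" and ac: "acyc V E" and d: "ds V E x y"
    and neX: "nbrs V E x - {y} \<noteq> {}" and neY: "nbrs V E y - {x} \<noteq> {}"
  shows "xi_ee V E = (5 * real (card V) - 4) / 6"
proof -
  define Lx where "Lx = nbrs V E x - {y}"
  define Ly where "Ly = nbrs V E y - {x}"
  have fV: "finite V" using sg unfolding simple_graph_def by auto
  have bx: "x \<in> V" "y \<in> V" "x \<noteq> y" using ds_basic[OF d] by auto
  have sx: "degree E x = card Lx + 1" "ecc V E x = 2" "\<And>v. v \<in> Lx \<Longrightarrow> degree E v = 1 \<and> ecc V E v = 3"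
    using ds_side[OF sg conn ac d neY] unfolding Lx_def by auto
  have sy: "degree E y = card Ly + 1" "ecc V E y = 2" "\<And>v. v \<in> Ly \<Longrightarrow> degree E v = 1 \<and> ecc V E v = 3"
    using ds_side[OF sg conn ac ds_sym[OF d] neX] unfolding Ly_def by auto
  have VV: "V = insert x (insert y (Lx \<union> Ly))" using ds_V[OF d] unfolding Lx_def Ly_def .
  have dj: "Lx \<inter> Ly = {}" using ds_disj[OF sg ac d] unfolding Lx_def Ly_def by auto
  have nx: "x \<notin> Lx \<union> Ly" "y \<notin> Lx \<union> Ly" "x \<noteq> y"
    using no_loop[OF sg] bx unfolding Lx_def Ly_def nbrs_def by auto
  have fL: "finite Lx" "finite Ly" using fV VV by (metis finite_Un finite_insert)+
  let ?f = "\<lambda>v. real (degree E v) / real (ecc V E v)"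
  have "xi_ee V E = ?f x + (?f y + (sum ?f Lx + sum ?f Ly))"
    unfolding xi_ee_def using nx fL dj VV by (simp add: sum.union_disjoint)
  also have "sum ?f Lx = real (card Lx) / 3" using sx(3) by simp
  also have "sum ?f Ly = real (card Ly) / 3" using sy(3) by simp
  also have "?f x = (real (card Lx) + 1) / 2" using sx by simp
  also have "?f y = (real (card Ly) + 1) / 2" using sy by simp
  finally have xi: "xi_ee V E = (real (card Lx) + 1) / 2 + ((real (card Ly) + 1) / 2 + (real (card Lx) / 3 + real (card Ly) / 3))" .
  have "card V = card Lx + card Ly + 2" using nx fL dj VV by (simp add: card_Un_disjoint)
  then have "real (card V) = real (card Lx) + real (card Ly) + 2" by simp
  then show ?thesis unfolding xi by (simp add: divide_simps)
qed

lemma ds_bip_aux: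
  assumes sg: "simple_graph V E" and ac: "acyc V E" and d: "ds V E x y"
    and AB: "A \<union> B = V" "A \<inter> B = {}" "independent E A" "independent E B" and xA: "x \<in> A"
  shows "card A = card (nbrs V E y - {x}) + 1 \<and> card B = card (nbrs V E x - {y}) + 1"
proof -
  define Lx where "Lx = nbrs V E x - {y}"
  define Ly where "Ly = nbrs V E y - {x}"
  have fV: "finite V" using sg unfolding simple_graph_def by auto
  have bx: "x \<in> V" "y \<in> V" "x \<noteq> y" "{x,y} \<in> E" using ds_basic[OF d] by auto
  have VV: "V = insert x (insert y (Lx \<union> Ly))" using ds_V[OF d] unfolding Lx_def Ly_def .
  have dj: "Lx \<inter> Ly = {}" using ds_disj[OF sg ac d] unfolding Lx_def Ly_def by auto
  have nx: "x \<notin> Lx \<union> Ly" "y \<notin> Lx \<union> Ly"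
    using no_loop[OF sg] bx unfolding Lx_def Ly_def nbrs_def by auto
  have fL: "finite Lx" "finite Ly" using fV VV by (metis finite_Un finite_insert)+
  have yB: "y \<in> B" using AB xA bx unfolding independent_def by blast
  have LxB: "Lx \<subseteq> B" using AB xA unfolding independent_def Lx_def nbrs_def by blast
  have LyA: "Ly \<subseteq> A" using AB yB unfolding independent_def Ly_def nbrs_def by blast
  have "A = insert x Ly"
  proof
    show "insert x Ly \<subseteq> A" using xA LyA by simp
    show "A \<subseteq> insert x Ly"
    proof
      fix v assume v: "v \<in> A"
      then have "v \<notin> B" using AB(2) by blast
      then have "v \<noteq> y" "v \<notin> Lx" using yB LxB by auto
      moreover have "v \<in> V" using v AB(1) by blast
      ultimately show "v \<in> insert x Ly" using VV by blast
    qed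
  qed
  moreover have "B = insert y Lx"
  proof
    show "insert y Lx \<subseteq> B" using yB LxB by simp
    show "B \<subseteq> insert y Lx"
    proof
      fix v assume v: "v \<in> B"
      then have "v \<notin> A" using AB(2) by blast
      then have "v \<noteq> x" "v \<notin> Ly" using xA LyA by auto
      moreover have "v \<in> V" using v AB(1) by blast
      ultimately show "v \<in> insert y Lx" using VV by blast
    qed
  qed
  ultimately have "card A = card Ly + 1 \<and> card B = card Lx + 1" using nx fL by simp
  then show ?thesis unfolding Lx_def Ly_def .
qed

lemma ds_bip:
  assumes sg: "simple_graph V E" and ac: "acyc V E" and d: "ds V E x y" and hb: "has_bipartition V E p q"
  shows "(p = card (nbrs V E y - {x}) + 1 \<and> q = card (nbrs V E x - {y}) + 1) \<or>
         (q = card (nbrs V E y - {x}) + 1 \<and> p = card (nbrs V E x - {y}) + 1)"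
proof -
  obtain A B where AB: "A \<union> B = V" "A \<inter> B = {}" "independent E A" "independent E B" "card A = p" "card B = q"
    using hb unfolding has_bipartition_def by blast
  have xV: "x \<in> V" using ds_basic[OF d] by auto
  show ?thesis
  proof (cases "x \<in> A")
    case True then show ?thesis using ds_bip_aux[OF sg ac d AB(1-4)] AB by auto
  next
    case False then have "x \<in> B" using AB xV by auto
    have "B \<union> A = V" "B \<inter> A = {}" using AB by auto
    then show ?thesis using ds_bip_aux[OF sg ac d \<open>B \<union> A = V\<close> \<open>B \<inter> A = {}\<close> AB(4) AB(3) \<open>x \<in> B\<close>] AB by auto
  qed
qed



lemma P2_mem: "{c,d} \<in> P2_edges a b \<longleftrightarrow> (c=0 \<and> d=1) \<or> (c=1 \<and> d=0) \<or> (c=0 \<and> 2\<le>d \<and> d\<le>a+1) \<or> (d=0 \<and> 2\<le>c \<and> c\<le>a+1)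
   \<or> (c=1 \<and> a+2\<le>d \<and> d\<le>a+b+1) \<or> (d=1 \<and> a+2\<le>c \<and> c\<le>a+b+1)"
proof -
  have im: "\<And>k S. {c,d} \<in> (\<lambda>i. {k,i}) ` S \<longleftrightarrow> (c = k \<and> d \<in> S) \<or> (d = k \<and> c \<in> S)"
  proof
    fix k S assume "{c,d} \<in> (\<lambda>i. {k,i}) ` S"
    then obtain i where "i \<in> S" "{c,d} = {k,i}" by blast
    then show "(c = k \<and> d \<in> S) \<or> (d = k \<and> c \<in> S)" by (auto simp: doubleton_eq_iff)
  next
    fix k S assume "(c = k \<and> d \<in> S) \<or> (d = k \<and> c \<in> S)"
    then show "{c,d} \<in> (\<lambda>i. {k,i}) ` S"
    proof
      assume "c = k \<and> d \<in> S" then show ?thesis by blast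
    next
      assume h: "d = k \<and> c \<in> S"
      then have "{c,d} = {k,c}" by (simp add: insert_commute)
      then show ?thesis using h by blast
    qed
  qed
  have "{c,d} \<in> {{0::nat,1}} \<longleftrightarrow> (c=0 \<and> d=1) \<or> (c=1 \<and> d=0)" by (simp add: doubleton_eq_iff)
  then show ?thesis unfolding P2_edges_def Un_iff im atLeastAtMost_iff by linarith
qed

lemma iso_ds:
  assumes sg: "simple_graph V E" and iso: "graph_iso V E (P2_verts a b) (P2_edges a b)"
  shows "\<exists>x y. ds V E x y"
proof -
  obtain f where bij: "bij_betw f V {0..a+b+1}" and ed: "\<forall>u\<in>V. \<forall>v\<in>V. {u,v} \<in> E \<longleftrightarrow> {f u, f v} \<in> P2_edges a b"
    using iso unfolding graph_iso_def P2_verts_def by blast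
  have img: "f ` V = {0..a+b+1}" and inj: "inj_on f V" using bij unfolding bij_betw_def by auto
  obtain x where x: "x \<in> V" "f x = 0" using img by (metis atLeastAtMost_iff imageE le0)
  obtain y where y: "y \<in> V" "f y = 1" using img by (metis atLeastAtMost_iff imageE le_add2 le_add_same_cancel2 zero_le_one one_le_numeral add_increasing2 le_add1 le_numeral_extra(4) One_nat_def Suc_eq_plus1 le_SucI le_refl)
  have xy: "x \<noteq> y" using x y by auto
  have "ds V E x y" unfolding ds_def
  proof (intro conjI ballI)
    show "{x,y} \<in> E" using ed x y by (simp add: P2_mem)
  next
    fix v assume v: "v \<in> V"
    have fv: "f v \<le> a+b+1" using img v by auto
    show "v = x \<or> v = y \<or> {x,v} \<in> E \<or> {y,v} \<in> E"
    proof (cases "f v = 0")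
      case True then show ?thesis using inj x v by (metis inj_on_eq_iff)
    next
      case False note f0 = False
      show ?thesis
      proof (cases "f v = 1")
        case True then show ?thesis using inj y v by (metis inj_on_eq_iff)
      next
        case False
        show ?thesis
        proof (cases "f v \<le> a + 1")
          case True then have "{x,v} \<in> E" using ed x v f0 False by (simp add: P2_mem)
          then show ?thesis by blast
        next
          case False2: False
          then have "{y,v} \<in> E" using ed y v f0 False fv by (simp add: P2_mem)
          then show ?thesis by blast
        qed
      qed
    qed
  next
    fix e assume e: "e \<in> E"
    then obtain u v where uv: "e = {u,v}" "u \<in> V" "v \<in> V" "u \<noteq> v" using sg simple_edge_obtain by blast
    then have "{f u, f v} \<in> P2_edges a b" using ed e by auto
    then have "f u = 0 \<or> f u = 1 \<or> f v = 0 \<or> f v = 1" by (auto simp: P2_mem)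
    then have "u = x \<or> u = y \<or> v = x \<or> v = y" using inj x y uv by (metis inj_on_eq_iff)
    then show "x \<in> e \<or> y \<in> e" using uv by auto
  qed (use x y xy in auto)
  then show ?thesis by blast
qed



lemma ds_iso:
  assumes sg: "simple_graph V E" and ac: "acyc V E" and d: "ds V E x y"
    and ca: "card (nbrs V E x - {y}) = a" and cb: "card (nbrs V E y - {x}) = b"
  shows "graph_iso V E (P2_verts a b) (P2_edges a b)"
proof -
  define Lx where "Lx = nbrs V E x - {y}"
  define Ly where "Ly = nbrs V E y - {x}"
  have fV: "finite V" using sg unfolding simple_graph_def by auto
  have bx: "x \<in> V" "y \<in> V" "x \<noteq> y" "{x,y} \<in> E" using ds_basic[OF d] by auto
  have VV: "V = insert x (insert y (Lx \<union> Ly))" using ds_V[OF d] unfolding Lx_def Ly_def .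
  have dj: "Lx \<inter> Ly = {}" using ds_disj[OF sg ac d] unfolding Lx_def Ly_def by auto
  have nx: "x \<notin> Lx \<union> Ly" "y \<notin> Lx \<union> Ly"
    using no_loop[OF sg] bx unfolding Lx_def Ly_def nbrs_def by auto
  have fL: "finite Lx" "finite Ly" using fV VV by (metis finite_Un finite_insert)+
  obtain g1 where g1: "bij_betw g1 Lx {2..a+1}"
    using finite_same_card_bij[OF fL(1), of "{2..a+1}"] ca unfolding Lx_def by auto
  obtain g2 where g2: "bij_betw g2 Ly {a+2..a+b+1}"
    using finite_same_card_bij[OF fL(2), of "{a+2..a+b+1}"] cb unfolding Ly_def by auto
  define f where "f v = (if v = x then 0 else if v = y then 1 else if v \<in> Lx then g1 v else g2 v)" for v
  have fx: "f x = 0" and fy: "f y = 1" using bx unfolding f_def by auto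
  have fLx: "f v = g1 v \<and> 2 \<le> f v \<and> f v \<le> a+1" if v: "v \<in> Lx" for v
  proof -
    have "v \<noteq> x" "v \<noteq> y" using nx v by auto
    then have "f v = g1 v" using v unfolding f_def by simp
    moreover have "g1 v \<in> {2..a+1}" using bij_betw_apply[OF g1 v] .
    ultimately show ?thesis by simp
  qed
  have fLy: "f v = g2 v \<and> a+2 \<le> f v \<and> f v \<le> a+b+1" if v: "v \<in> Ly" for v
  proof -
    have "v \<noteq> x" "v \<noteq> y" "v \<notin> Lx" using nx v dj by auto
    then have "f v = g2 v" using v unfolding f_def by simp
    moreover have "g2 v \<in> {a+2..a+b+1}" using bij_betw_apply[OF g2 v] .
    ultimately show ?thesis by simp
  qed
  have cls: "\<And>v. v \<in> V \<Longrightarrow> v = x \<or> v = y \<or> v \<in> Lx \<or> v \<in> Ly" using VV by blast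
  have i0: "\<And>v. v \<in> V \<Longrightarrow> f v = 0 \<longleftrightarrow> v = x"
  proof -
    fix v assume v: "v \<in> V"
    show "f v = 0 \<longleftrightarrow> v = x" using cls[OF v] fx fy fLx[of v] fLy[of v] bx by auto
  qed
  have i1: "\<And>v. v \<in> V \<Longrightarrow> f v = 1 \<longleftrightarrow> v = y"
  proof -
    fix v assume v: "v \<in> V"
    show "f v = 1 \<longleftrightarrow> v = y" using cls[OF v] fx fy fLx[of v] fLy[of v] bx by auto
  qed
  have iLx: "\<And>v. v \<in> V \<Longrightarrow> (2 \<le> f v \<and> f v \<le> a+1) \<longleftrightarrow> v \<in> Lx"
  proof -
    fix v assume v: "v \<in> V"
    show "(2 \<le> f v \<and> f v \<le> a+1) \<longleftrightarrow> v \<in> Lx" using cls[OF v] fx fy fLx[of v] fLy[of v] dj by auto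
  qed
  have iLy: "\<And>v. v \<in> V \<Longrightarrow> (a+2 \<le> f v \<and> f v \<le> a+b+1) \<longleftrightarrow> v \<in> Ly"
  proof -
    fix v assume v: "v \<in> V"
    show "(a+2 \<le> f v \<and> f v \<le> a+b+1) \<longleftrightarrow> v \<in> Ly" using cls[OF v] fx fy fLx[of v] fLy[of v] dj by auto
  qed
  have inj: "inj_on f V"
  proof (rule inj_onI)
    fix u v assume u: "u \<in> V" and v: "v \<in> V" and e: "f u = f v"
    consider "u = x" | "u = y" | "u \<in> Lx" | "u \<in> Ly" using cls[OF u] by blast
    then show "u = v"
    proof cases
      case 1 then have "f v = 0" using i0[OF u] e by metis
      then show ?thesis using i0[OF v] 1 by blast
    next
      case 2 then have "f v = 1" using i1[OF u] e by metis
      then show ?thesis using i1[OF v] 2 by blast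
    next
      case 3
      then have "2 \<le> f v \<and> f v \<le> a+1" using iLx[OF u] e by metis
      then have "v \<in> Lx" using iLx[OF v] by blast
      then show ?thesis using 3 fLx e g1 unfolding bij_betw_def by (metis inj_onD)
    next
      case 4
      then have "a+2 \<le> f v \<and> f v \<le> a+b+1" using iLy[OF u] e by metis
      then have "v \<in> Ly" using iLy[OF v] by blast
      then show ?thesis using 4 fLy e g2 unfolding bij_betw_def by (metis inj_onD)
    qed
  qed
  have img: "f ` V = {0..a+b+1}"
  proof
    show "f ` V \<subseteq> {0..a+b+1}"
    proof
      fix k assume "k \<in> f ` V"
      then obtain v where v: "v \<in> V" "k = f v" by blast
      show "k \<in> {0..a+b+1}" using cls[OF v(1)] fx fy fLx[of v] fLy[of v] v(2) by auto
    qed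
    show "{0..a+b+1} \<subseteq> f ` V"
    proof
      fix k assume k: "k \<in> {0..a+b+1}"
      consider "k = 0" | "k = 1" | "2 \<le> k \<and> k \<le> a+1" | "a+2 \<le> k \<and> k \<le> a+b+1" using k by force
      then show "k \<in> f ` V"
      proof cases
        case 1 then show ?thesis using fx bx by force
      next
        case 2 then show ?thesis using fy bx by force
      next
        case 3
        then have "k \<in> g1 ` Lx" using g1 unfolding bij_betw_def by auto
        then obtain u where "u \<in> Lx" "k = g1 u" by blast
        then show ?thesis using fLx VV by (metis UnI1 image_eqI insertI2)
      next
        case 4
        then have "k \<in> g2 ` Ly" using g2 unfolding bij_betw_def by auto
        then obtain u where "u \<in> Ly" "k = g2 u" by blast
        then show ?thesis using fLy VV by (metis UnI2 image_eqI insertI2)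
      qed
    qed
  qed
  have edges: "\<forall>u\<in>V. \<forall>v\<in>V. {u,v} \<in> E \<longleftrightarrow> {f u, f v} \<in> P2_edges a b"
  proof (intro ballI)
    fix u v assume u: "u \<in> V" and v: "v \<in> V"
    have L: "{u,v} \<in> E \<longleftrightarrow> (u = x \<and> v = y) \<or> (u = y \<and> v = x)
     \<or> (u = x \<and> v \<in> Lx) \<or> (v = x \<and> u \<in> Lx)
     \<or> (u = y \<and> v \<in> Ly) \<or> (v = y \<and> u \<in> Ly)"
      using ds_edge_char[OF sg ac d u v] unfolding Lx_def Ly_def .
    show "{u,v} \<in> E \<longleftrightarrow> {f u, f v} \<in> P2_edges a b"
      unfolding L P2_mem i0[OF u] i0[OF v] i1[OF u] i1[OF v] iLx[OF u] iLx[OF v] iLy[OF u] iLy[OF v]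
      by blast
  qed
  show ?thesis unfolding graph_iso_def P2_verts_def bij_betw_def using inj img edges by blast
qed



theorem theorem4p6:
  fixes V :: "'a set" and E :: "'a set set" and p q n :: nat
  assumes "is_tree V E"
    and "card V = n"
    and "p + q = n"
    and "q \<ge> p" and "p > 2"
    and "has_bipartition V E p q"
  shows "xi_ee V E \<le> (5 * real n - 4) / 6 \<and>
         (xi_ee V E = (5 * real n - 4) / 6 \<longleftrightarrow>
            graph_iso V E (P2_verts (p - 1) (q - 1)) (P2_edges (p - 1) (q - 1)))"
proof -
  have sg: "simple_graph V E" and conn: "connected_graph V E" and ac: "acyc V E"
    using assms(1) unfolding is_tree_def acyc_def by auto
  have fV: "finite V" using sg unfolding simple_graph_def by auto
  have q2: "q > 2" using assms(4,5) by linarith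
  have nu: "\<forall>z\<in>V. \<exists>v\<in>V. v \<noteq> z \<and> {z,v} \<notin> E" using no_universal[OF assms(6) assms(5) q2] by blast
  have npos: "card V > 0" using assms(2,3,5) by linarith
  define C where "C = {x\<in>V. ecc V E x \<le> 2}"
  define S where "S = (\<Sum>x\<in>C. degree E x)"
  have SC: "S \<le> card V" unfolding S_def C_def using C_sum(1)[OF sg conn ac nu] .
  have ptw: "real (degree E x) / real (ecc V E x) \<le> real (degree E x) / 3 + (if x \<in> C then real (degree E x) / 6 else 0)"
    if x: "x \<in> V" for x
  proof -
    have e2: "2 \<le> ecc V E x" using ecc_ge2[OF conn fV x] nu x by blast
    show ?thesis
    proof (cases "x \<in> C")
      case True then have "ecc V E x = 2" using e2 unfolding C_def by simp
      then show ?thesis using True by simp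
    next
      case False then have "3 \<le> ecc V E x" using x unfolding C_def by simp
      then have "real (degree E x) / real (ecc V E x) \<le> real (degree E x) / 3"
        by (intro divide_left_mono) auto
      then show ?thesis using False by simp
    qed
  qed
  have "xi_ee V E \<le> (\<Sum>x\<in>V. real (degree E x) / 3 + (if x \<in> C then real (degree E x) / 6 else 0))"
    unfolding xi_ee_def by (rule sum_mono) (rule ptw)
  also have "\<dots> = (\<Sum>x\<in>V. real (degree E x)) / 3 + (\<Sum>x\<in>C. real (degree E x)) / 6"
  proof -
    have "(\<Sum>x\<in>V. (if x \<in> C then real (degree E x) / 6 else 0)) = (\<Sum>x\<in>C. real (degree E x) / 6)"
      using sum.inter_filter[OF fV, of "\<lambda>x. real (degree E x) / 6" "\<lambda>x. x \<in> C"]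
      unfolding C_def by simp
    then show ?thesis by (simp add: sum.distrib sum_divide_distrib)
  qed
  also have "(\<Sum>x\<in>V. real (degree E x)) = 2 * real (card E)"
    using handshake[OF sg] by (metis of_nat_sum of_nat_mult of_nat_numeral)
  also have "(\<Sum>x\<in>C. real (degree E x)) = real S" unfolding S_def by simp
  also have "2 * real (card E) / 3 + real S / 6 = (4 * real (card E) + real S) / 6" by (simp add: field_simps)
  finally have xi1: "xi_ee V E \<le> (4 * real (card E) + real S) / 6" .
  have Vne: "V \<noteq> {}" using npos by auto
  have cE: "card E + 1 \<le> card V" using forest_edges[OF sg _ Vne] ac unfolding acyc_def by blast
  have r1: "real (card E) + 1 \<le> real n" using cE assms(2) by linarith
  have r2: "real S \<le> real n" using SC assms(2) by linarith
  have "(4 * real (card E) + real S) / 6 \<le> (5 * real n - 4) / 6"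
    by (rule divide_right_mono) (use r1 r2 in linarith, simp)
  then have bound: "xi_ee V E \<le> (5 * real n - 4) / 6" using xi1 by linarith
  have eq1: "xi_ee V E = (5 * real n - 4) / 6 \<Longrightarrow> graph_iso V E (P2_verts (p - 1) (q - 1)) (P2_edges (p - 1) (q - 1))"
  proof -
    assume eq: "xi_ee V E = (5 * real n - 4) / 6"
    have "(5 * real n - 4) / 6 \<le> (4 * real (card E) + real S) / 6" using eq xi1 by linarith
    then have "5 * real n - 4 \<le> 4 * real (card E) + real S" by simp
    then have "real S \<ge> real n" using r1 by linarith
    then have "S = card V" using SC assms(2) by linarith
    then obtain x y where xy: "x \<in> V" "y \<in> V" "x \<noteq> y" "{x,y} \<in> E" "nbrs V E x \<union> nbrs V E y = V"
      using C_sum(2)[OF sg conn ac nu] npos unfolding S_def C_def by blast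
    have d: "ds V E x y" using ds_from_union[OF sg ac xy] .
    show ?thesis using ds_bip[OF sg ac d assms(6)]
    proof
      assume h: "p = card (nbrs V E y - {x}) + 1 \<and> q = card (nbrs V E x - {y}) + 1"
      show ?thesis by (rule ds_iso[OF sg ac ds_sym[OF d]]) (use h in auto)
    next
      assume h: "q = card (nbrs V E y - {x}) + 1 \<and> p = card (nbrs V E x - {y}) + 1"
      show ?thesis by (rule ds_iso[OF sg ac d]) (use h in auto)
    qed
  qed
  have eq2: "graph_iso V E (P2_verts (p - 1) (q - 1)) (P2_edges (p - 1) (q - 1)) \<Longrightarrow> xi_ee V E = (5 * real n - 4) / 6"
  proof -
    assume "graph_iso V E (P2_verts (p - 1) (q - 1)) (P2_edges (p - 1) (q - 1))"
    then obtain x y where d: "ds V E x y" using iso_ds[OF sg] by blast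
    have "card (nbrs V E y - {x}) \<ge> 2 \<and> card (nbrs V E x - {y}) \<ge> 2"
      using ds_bip[OF sg ac d assms(6)] assms(5) q2 by auto
    then have ne: "nbrs V E x - {y} \<noteq> {}" "nbrs V E y - {x} \<noteq> {}" by (metis card.empty not_numeral_le_zero)+
    show ?thesis using ds_xi[OF sg conn ac d ne] assms(2) by simp
  qed
  show ?thesis using bound eq1 eq2 by blast
qed

end
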